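(* Let $s\in W_p$ be a reflection in a wall of $\overline{C}$, $\lambda\in C\cap X(T)$, $\mu\in\overline{C}\cap X(T)$ with $\mathrm{Stab}_{W_p}(\mu)=\{1,s\}$, and let $w\in W^{I,\lambda}$. Then $ws\cdot\lambda\in C_I\cap X(T)$ if and only if $wsw^{-1}\notin W_{I,p}$.
   Context: $G$ connected reductive over algebraically closed field of characteristic $p>0$ satisfying Jantzen's standard assumptions, $p\ge h$ (Coxeter number). $T$ a maximal torus, $X(T)$ its character group, $\Phi\supseteq\Phi^+\supseteq\Phi_s$ roots, positive roots and simple roots, $\rho$ the half-sum of positive roots, $\alpha^\vee$ coroots. $W_p$ is the affine Weyl group, generated by the reflections $s_{\alpha,mp}=t_{mp\alpha}s_\alpha$ ($\alpha\in\Phi$, $m\in\mathbb{Z}$, $t_\gamma$ translation by $\gamma$), acting on $X(T)\otimes\mathbb{R}$ by the dot action $w\cdot\nu=w(\nu+\rho)-\rho$; stabilisers are for the dot action. Fix $I\subseteq\Phi_s$; $W_{I,p}\subseteq W_p$ is generated by $s_\alpha$ and translations by $mp\alpha$ for $\alpha\in I$, $m\in\mathbb{Z}$. $C=\{x:0<\langle x+\rho,\alpha^\vee\rangle<p\ \forall\alpha\in\Phi^+\}$ (fundamental alcove), $\overline{C}$ the same with non-strict inequalities; $C_I=\{x:0<\langle x+\rho,\alpha^\vee\rangle<p\ \forall\alpha\in\Phi^+\cap\mathbb{Z}I\}$, $\overline{C}_I$ with non-strict inequalities. $W^{I,\lambda}=\{w\in W_p: w\cdot\lambda\in\overline{C}_I\}$.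 *)

theory Defs
  imports "HOL-Analysis.Analysis" "HOL-Computational_Algebra.Primes"
begin

text \<open>Model: X(T) is a full-rank lattice in a Euclidean space V = X(T) (x) R, equipped
with a W-invariant inner product; the coroot pairing is <x, a^v> = 2 (x.a)/(a.a).\<close>

definition pair :: "'a::real_inner \<Rightarrow> 'a \<Rightarrow> real" where
  "pair x a = 2 * (x \<bullet> a) / (a \<bullet> a)"

definition zspan :: "'a::real_vector set \<Rightarrow> 'a set" where
  "zspan S = {x. \<exists>F c. finite F \<and> F \<subseteq> S \<and> x = (\<Sum>b\<in>F. of_int (c b :: int) *\<^sub>R b)}"

definition nnzspan :: "'a::real_vector set \<Rightarrow> 'a set" where
  "nnzspan S = {x. \<exists>F c. finite F \<and> F \<subseteq> S \<and> (\<forall>b\<in>F. c b \<ge> (0::int))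
                    \<and> x = (\<Sum>b\<in>F. of_int (c b) *\<^sub>R b)}"

definition root_datum :: "'a::euclidean_space set \<Rightarrow> 'a set \<Rightarrow> bool" where
  "root_datum X Phi \<longleftrightarrow>
     (\<exists>B. independent B \<and> span B = UNIV \<and> X = zspan B) \<and>
     finite Phi \<and> Phi \<subseteq> X \<and> 0 \<notin> Phi \<and>
     (\<forall>a\<in>Phi. \<forall>b\<in>Phi. b - pair b a *\<^sub>R a \<in> Phi) \<and>
     (\<forall>a\<in>Phi. \<forall>c::real. c *\<^sub>R a \<in> Phi \<longrightarrow> c = 1 \<or> c = -1) \<and>
     (\<forall>x\<in>X. \<forall>a\<in>Phi. pair x a \<in> \<int>)"

definition is_base :: "'a::euclidean_space set \<Rightarrow> 'a set \<Rightarrow> bool" where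
  "is_base Phi S \<longleftrightarrow> S \<subseteq> Phi \<and> independent S \<and>
     Phi \<subseteq> nnzspan S \<union> uminus ` nnzspan S"

definition pos_roots :: "'a::euclidean_space set \<Rightarrow> 'a set \<Rightarrow> 'a set" where
  "pos_roots Phi S = Phi \<inter> nnzspan S"

definition rho :: "'a::euclidean_space set \<Rightarrow> 'a set \<Rightarrow> 'a" where
  "rho Phi S = (1/2) *\<^sub>R (\<Sum>a\<in>pos_roots Phi S. a)"

text \<open>Derived group simply connected: fundamental weights exist in X.\<close>
definition sc_derived :: "'a::euclidean_space set \<Rightarrow> 'a set \<Rightarrow> bool" where
  "sc_derived X S \<longleftrightarrow>
     (\<forall>a\<in>S. \<exists>w\<in>X. \<forall>b\<in>S. pair w b = (if b = a then 1 else 0))"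

text \<open>Coxeter number (maximum over the irreducible components) = max <rho, a^v> + 1.\<close>
definition coxeter :: "'a::euclidean_space set \<Rightarrow> 'a set \<Rightarrow> real" where
  "coxeter Phi S = Max (insert 0 ((\<lambda>a. pair (rho Phi S) a + 1) ` pos_roots Phi S))"

definition aff_refl :: "'a::real_inner \<Rightarrow> real \<Rightarrow> 'a \<Rightarrow> 'a" where
  "aff_refl a k = (\<lambda>x. x - pair x a *\<^sub>R a + k *\<^sub>R a)"

definition transl :: "'a::real_vector \<Rightarrow> 'a \<Rightarrow> 'a" where
  "transl v = (\<lambda>x. x + v)"

text \<open>Group generated by a set of bijections closed under inverses (here all
generators are involutions or come with their inverse translations).\<close>
inductive_set gen_group :: "('a \<Rightarrow> 'a) set \<Rightarrow> ('a \<Rightarrow> 'a) set" for G where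
  gen_id: "id \<in> gen_group G"
| gen_step: "g \<in> G \<Longrightarrow> w \<in> gen_group G \<Longrightarrow> g \<circ> w \<in> gen_group G"

definition Wp :: "'a::euclidean_space set \<Rightarrow> nat \<Rightarrow> ('a \<Rightarrow> 'a) set" where
  "Wp Phi p = gen_group {aff_refl a (of_int m * real p) | a m. a \<in> Phi}"

definition WIp :: "'a::euclidean_space set \<Rightarrow> nat \<Rightarrow> ('a \<Rightarrow> 'a) set" where
  "WIp I p = gen_group ({aff_refl a 0 | a. a \<in> I} \<union>
                        {transl ((of_int m * real p) *\<^sub>R a) | a m. a \<in> I})"

definition dot :: "'a::euclidean_space set \<Rightarrow> 'a set \<Rightarrow> ('a \<Rightarrow> 'a) \<Rightarrow> 'a \<Rightarrow> 'a" where
  "dot Phi S w x = w (x + rho Phi S) - rho Phi S"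

definition alcove :: "'a::euclidean_space set \<Rightarrow> 'a set \<Rightarrow> nat \<Rightarrow> 'a set" where
  "alcove Phi S p = {x. \<forall>a\<in>pos_roots Phi S.
       0 < pair (x + rho Phi S) a \<and> pair (x + rho Phi S) a < real p}"

definition alcove_cl :: "'a::euclidean_space set \<Rightarrow> 'a set \<Rightarrow> nat \<Rightarrow> 'a set" where
  "alcove_cl Phi S p = {x. \<forall>a\<in>pos_roots Phi S.
       0 \<le> pair (x + rho Phi S) a \<and> pair (x + rho Phi S) a \<le> real p}"

definition alcove_I :: "'a::euclidean_space set \<Rightarrow> 'a set \<Rightarrow> 'a set \<Rightarrow> nat \<Rightarrow> 'a set" where
  "alcove_I Phi S I p = {x. \<forall>a\<in>pos_roots Phi S \<inter> zspan I.
       0 < pair (x + rho Phi S) a \<and> pair (x + rho Phi S) a < real p}"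

definition alcove_I_cl :: "'a::euclidean_space set \<Rightarrow> 'a set \<Rightarrow> 'a set \<Rightarrow> nat \<Rightarrow> 'a set" where
  "alcove_I_cl Phi S I p = {x. \<forall>a\<in>pos_roots Phi S \<inter> zspan I.
       0 \<le> pair (x + rho Phi S) a \<and> pair (x + rho Phi S) a \<le> real p}"

definition WIlam :: "'a::euclidean_space set \<Rightarrow> 'a set \<Rightarrow> 'a set \<Rightarrow> nat \<Rightarrow> 'a \<Rightarrow> ('a \<Rightarrow> 'a) set" where
  "WIlam Phi S I p lam = {w \<in> Wp Phi p. dot Phi S w lam \<in> alcove_I_cl Phi S I p}"

text \<open>s is the reflection (for the dot action) in a wall of the closed fundamental alcove:
its fixed hyperplane H meets the closed alcove in a facet (affine hull of H \<inter> Cbar is H).\<close>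
definition wall_refl :: "'a::euclidean_space set \<Rightarrow> 'a set \<Rightarrow> nat \<Rightarrow> ('a \<Rightarrow> 'a) \<Rightarrow> bool" where
  "wall_refl Phi S p s \<longleftrightarrow> (\<exists>a\<in>Phi. \<exists>m::int.
      s = aff_refl a (of_int m * real p) \<and>
      affine hull ({x. pair (x + rho Phi S) a = of_int m * real p} \<inter> alcove_cl Phi S p)
        = {x. pair (x + rho Phi S) a = of_int m * real p})"

end

theory Submission
  imports Defs
begin

lemma pair_add: "pair (x + y) a = pair x a + pair y a"
  by (simp add: pair_def inner_add_left add_divide_distrib)
lemma pair_diff: "pair (x - y) a = pair x a - pair y a"
  by (simp add: pair_def inner_diff_left diff_divide_distrib)
lemma pair_scale: "pair (t *\<^sub>R x) a = t * pair x a"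
  by (simp add: pair_def)
lemma pair_neg: "pair (- x) a = - pair x a"
  by (simp add: pair_def)
lemma pair_neg2: "pair x (- a) = - pair x a"
  by (simp add: pair_def)
lemma pair_self: "a \<noteq> 0 \<Longrightarrow> pair a a = 2"
  by (simp add: pair_def)
lemma pair_zero[simp]: "pair 0 a = 0" by (simp add: pair_def)
lemma pair_sum: "pair (\<Sum>i\<in>F. f i) a = (\<Sum>i\<in>F. pair (f i) a)"
  by (induction F rule: infinite_finite_induct) (auto simp: pair_add)

definition sr :: "'a::real_inner \<Rightarrow> 'a \<Rightarrow> 'a" where "sr c x = x - pair x c *\<^sub>R c"

lemma aff_refl_sr: "aff_refl c k x = sr c x + k *\<^sub>R c"
  by (simp add: aff_refl_def sr_def)

lemma sr_inner: "inner (sr c x) y = inner x (sr c y)"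
  unfolding sr_def pair_def by (simp add: inner_diff_left inner_diff_right inner_commute)

lemma sr_norm: "c \<noteq> 0 \<Longrightarrow> inner (sr c a) (sr c a) = inner a a"
  unfolding sr_def pair_def
  by (simp add: inner_diff_left inner_diff_right inner_commute field_simps power2_eq_square)

lemma pair_sr: "c \<noteq> 0 \<Longrightarrow> pair (sr c x) a = pair x (sr c a)"
proof -
  assume c: "c \<noteq> 0"
  have "pair (sr c x) a = 2 * inner x (sr c a) / inner a a" by (simp add: pair_def sr_inner)
  also have "\<dots> = pair x (sr c a)" by (simp add: pair_def sr_norm[OF c])
  finally show ?thesis .
qed

lemma pair_sr_expand: "pair (sr c x) a = pair x a - pair x c * pair c a"
  unfolding sr_def by (simp add: pair_diff pair_scale)

lemma aff_refl_alt: "aff_refl c k y = y - (pair y c - k) *\<^sub>R c"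
  by (simp add: aff_refl_def algebra_simps)

lemma aff_refl_invol: "c \<noteq> 0 \<Longrightarrow> aff_refl c k (aff_refl c k x) = x"
proof -
  assume c: "c \<noteq> 0"
  define t where "t = pair x c - k"
  have 1: "aff_refl c k x = x - t *\<^sub>R c" by (simp add: aff_refl_alt t_def)
  have 2: "pair (x - t *\<^sub>R c) c - k = - t"
    using c by (simp add: pair_diff pair_scale pair_self t_def)
  show ?thesis unfolding 1 aff_refl_alt[of c k "x - t *\<^sub>R c"] 2 by simp
qed

lemma sr_invol: "c \<noteq> 0 \<Longrightarrow> sr c (sr c x) = x"
  using aff_refl_invol[of c 0 x] by (simp add: aff_refl_sr)

lemma sr_add: "sr c (u + v) = sr c u + sr c v"
  by (simp add: sr_def pair_add algebra_simps)
lemma sr_scale: "sr c (t *\<^sub>R u) = t *\<^sub>R sr c u"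
  by (simp add: sr_def pair_scale algebra_simps)
lemma sr_diff: "sr c (u - v) = sr c u - sr c v"
  by (simp add: sr_def pair_diff algebra_simps)
lemma sr_neg: "sr c (- u) = - sr c u"
  by (simp add: sr_def pair_neg algebra_simps)

lemma pair_aff_refl: "c \<noteq> 0 \<Longrightarrow> pair (aff_refl c k x) a - k2 = pair x (sr c a) - (k2 - k * pair c a)"
  by (simp add: aff_refl_sr pair_add pair_scale pair_sr)

lemma sr_conj: "c \<noteq> 0 \<Longrightarrow> sr c (sr b (sr c x)) = sr (sr c b) x"
proof -
  assume c: "c \<noteq> 0"
  have "sr c (sr b (sr c x)) = sr c (sr c x) - pair (sr c x) b *\<^sub>R sr c b"
    by (simp add: sr_def[of b] sr_diff sr_scale)
  also have "\<dots> = x - pair x (sr c b) *\<^sub>R sr c b" using c by (simp add: sr_invol pair_sr)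
  finally show ?thesis by (simp add: sr_def)
qed

lemma aff_conj: "c \<noteq> 0 \<Longrightarrow>
  aff_refl c k1 (aff_refl b k2 (aff_refl c k1 x)) = aff_refl (sr c b) (k2 - k1 * pair c b) x"
proof -
  assume c: "c \<noteq> 0"
  have scc: "sr c c = - c" using c by (simp add: sr_def pair_self scaleR_2)
  have "aff_refl c k1 (aff_refl b k2 (aff_refl c k1 x))
      = sr c (sr b (sr c x)) + k1 *\<^sub>R sr c (sr b c) + k2 *\<^sub>R sr c b + k1 *\<^sub>R c"
    by (simp add: aff_refl_sr sr_add sr_scale algebra_simps)
  also have "sr c (sr b c) = - c - pair c b *\<^sub>R sr c b"
    by (simp add: sr_def[of b c] sr_diff sr_scale scc)
  finally show ?thesis using c
    by (simp add: sr_conj aff_refl_sr algebra_simps)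
qed



lemma zspan_0: "0 \<in> zspan B"
  unfolding zspan_def by (rule CollectI, rule exI[of _ "{}"]) auto

lemma zspan_base: "b \<in> B \<Longrightarrow> b \<in> zspan B"
  unfolding zspan_def by (rule CollectI, rule exI[of _ "{b}"], rule exI[of _ "\<lambda>_. 1"]) auto

lemma sum_restrict_if:
  assumes "finite F" "G \<subseteq> F"
  shows "(\<Sum>b\<in>F. of_int (if b \<in> G then c b else 0) *\<^sub>R (b::'a::real_vector)) = (\<Sum>b\<in>G. of_int (c b) *\<^sub>R b)"
proof -
  have "(\<Sum>b\<in>F. of_int (if b \<in> G then c b else 0) *\<^sub>R b) = (\<Sum>b\<in>F. if b \<in> G then of_int (c b) *\<^sub>R b else 0)"
    by (rule sum.cong) auto
  also have "\<dots> = (\<Sum>b\<in>F \<inter> G. of_int (c b) *\<^sub>R b)"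
    using assms by (simp add: sum.inter_restrict)
  also have "F \<inter> G = G" using assms by auto
  finally show ?thesis .
qed

lemma zspan_add: assumes "x \<in> zspan B" "y \<in> zspan B" shows "x + y \<in> zspan B"
proof -
  obtain F1 c1 where 1: "finite F1" "F1 \<subseteq> B" "x = (\<Sum>b\<in>F1. of_int (c1 b) *\<^sub>R b)"
    using assms(1) unfolding zspan_def by auto
  obtain F2 c2 where 2: "finite F2" "F2 \<subseteq> B" "y = (\<Sum>b\<in>F2. of_int (c2 b) *\<^sub>R b)"
    using assms(2) unfolding zspan_def by auto
  define c where "c b = (if b \<in> F1 then c1 b else 0) + (if b \<in> F2 then c2 b else 0)" for b
  have "(\<Sum>b\<in>F1 \<union> F2. of_int (c b) *\<^sub>R b) =
      (\<Sum>b\<in>F1 \<union> F2. of_int (if b \<in> F1 then c1 b else 0) *\<^sub>R b) +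
      (\<Sum>b\<in>F1 \<union> F2. of_int (if b \<in> F2 then c2 b else 0) *\<^sub>R b)"
    unfolding sum.distrib[symmetric] by (rule sum.cong) (simp_all add: c_def scaleR_add_left)
  also have "\<dots> = x + y" using 1 2 by (simp add: sum_restrict_if)
  finally show ?thesis unfolding zspan_def using 1 2
    by (intro CollectI exI[of _ "F1 \<union> F2"] exI[of _ c]) auto
qed

lemma zspan_scale: assumes "x \<in> zspan B" shows "of_int k *\<^sub>R x \<in> zspan B"
proof -
  obtain F c where 1: "finite F" "F \<subseteq> B" "x = (\<Sum>b\<in>F. of_int (c b) *\<^sub>R b)"
    using assms unfolding zspan_def by auto
  have "of_int k *\<^sub>R x = (\<Sum>b\<in>F. of_int (k * c b) *\<^sub>R b)"
  proof -
    have "of_int k *\<^sub>R x = (\<Sum>b\<in>F. of_int k *\<^sub>R (of_int (c b) *\<^sub>R b))"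
      unfolding 1 by (rule scaleR_sum_right)
    also have "\<dots> = (\<Sum>b\<in>F. of_int (k * c b) *\<^sub>R b)"
      by (simp only: scaleR_scaleR of_int_mult)
    finally show ?thesis .
  qed
  then show ?thesis unfolding zspan_def using 1
    by (intro CollectI exI[of _ F] exI[of _ "\<lambda>b. k * c b"]) simp
qed

lemma zspan_neg: "x \<in> zspan B \<Longrightarrow> - x \<in> zspan B"
  using zspan_scale[of x B "-1"] by simp

lemma zspan_diff: "x \<in> zspan B \<Longrightarrow> y \<in> zspan B \<Longrightarrow> x - y \<in> zspan B"
  using zspan_add[of x B "- y"] zspan_neg[of y B] by simp

lemma zspan_sum: "(\<And>i. i \<in> F \<Longrightarrow> f i \<in> zspan B) \<Longrightarrow> (\<Sum>i\<in>F. f i) \<in> zspan B"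
  by (induction F rule: infinite_finite_induct) (auto simp: zspan_0 zspan_add)

lemma zspan_span: "zspan B \<subseteq> span B"
proof
  fix x assume "x \<in> zspan B"
  then obtain F c where "finite F" "F \<subseteq> B" "x = (\<Sum>b\<in>F. of_int (c b) *\<^sub>R b)"
    unfolding zspan_def by auto
  then show "x \<in> span B" by (auto intro!: span_sum span_scale intro: span_base)
qed

lemma nnzspan_zspan: "nnzspan B \<subseteq> zspan B"
proof
  fix x assume "x \<in> nnzspan B"
  then obtain F c where "finite F" "F \<subseteq> B" "x = (\<Sum>b\<in>F. of_int (c b) *\<^sub>R b)"
    unfolding nnzspan_def by auto
  then show "x \<in> zspan B" unfolding zspan_def
    by (intro CollectI exI[of _ F] exI[of _ c]) simp
qed

lemma sr_sum: "sr c (\<Sum>i\<in>F. f i) = (\<Sum>i\<in>F. sr c (f i))"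
  by (induction F rule: infinite_finite_induct) (simp_all add: sr_add sr_def[of c 0])

locale RD =
  fixes X Phi S :: "'a::euclidean_space set" and p :: nat
  assumes rd: "root_datum X Phi" and base: "is_base Phi S" and sc: "sc_derived X S"
    and ppos: "p > 0"
begin

lemma rd_all: "finite Phi \<and> Phi \<subseteq> X \<and> 0 \<notin> Phi \<and>
     (\<forall>a\<in>Phi. \<forall>b\<in>Phi. b - pair b a *\<^sub>R a \<in> Phi) \<and>
     (\<forall>a\<in>Phi. \<forall>c::real. c *\<^sub>R a \<in> Phi \<longrightarrow> c = 1 \<or> c = -1) \<and>
     (\<forall>x\<in>X. \<forall>a\<in>Phi. pair x a \<in> \<int>)"
  using rd unfolding root_datum_def by (elim conjE) (intro conjI; assumption)

lemma finPhi: "finite Phi" using rd_all by simp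
lemma Phi_X: "Phi \<subseteq> X" using rd_all by simp
lemma Phi_nz: "a \<in> Phi \<Longrightarrow> a \<noteq> 0" using rd_all by auto
lemma sr_Phi: "a \<in> Phi \<Longrightarrow> b \<in> Phi \<Longrightarrow> sr a b \<in> Phi"
  using rd_all unfolding sr_def by simp
lemma neg_Phi: "a \<in> Phi \<Longrightarrow> - a \<in> Phi"
  using sr_Phi[of a a] Phi_nz[of a] by (simp add: sr_def pair_self scaleR_2)
lemma reduced: "a \<in> Phi \<Longrightarrow> t *\<^sub>R a \<in> Phi \<Longrightarrow> t = 1 \<or> t = -1"
  using rd_all by simp
lemma int_pair: "x \<in> X \<Longrightarrow> a \<in> Phi \<Longrightarrow> pair x a \<in> \<int>"
  using rd_all by simp
lemma int_pair_roots: "a \<in> Phi \<Longrightarrow> b \<in> Phi \<Longrightarrow> pair a b \<in> \<int>"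
  using int_pair Phi_X by auto

lemma X_zspan: obtains B where "X = zspan B"
proof -
  have "\<exists>B. independent B \<and> span B = UNIV \<and> X = zspan B"
    using rd unfolding root_datum_def by (elim conjE) assumption
  then show ?thesis using that by (elim exE conjE) assumption
qed

lemma X_add: assumes "x \<in> X" "y \<in> X" shows "x + y \<in> X"
proof -
  obtain B where B: "X = zspan B" by (rule X_zspan)
  show ?thesis using assms zspan_add[of x B y] unfolding B by simp
qed
lemma X_scale: assumes "x \<in> X" "k \<in> \<int>" shows "k *\<^sub>R x \<in> X"
proof -
  obtain m where m: "k = of_int m" using assms(2) Ints_cases by blast
  obtain B where B: "X = zspan B" by (rule X_zspan)
  show ?thesis using assms zspan_scale[of x B m] unfolding B m by simp
qed
lemma X_0: "0 \<in> X"
proof -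
  obtain B where B: "X = zspan B" by (rule X_zspan)
  show ?thesis unfolding B by (rule zspan_0)
qed
lemma X_sum: "(\<And>i. i \<in> F \<Longrightarrow> f i \<in> X) \<Longrightarrow> (\<Sum>i\<in>F. f i) \<in> X"
  by (induction F rule: infinite_finite_induct) (auto simp: X_add X_0)
lemma X_neg: assumes "x \<in> X" shows "- x \<in> X"
  using X_scale[OF assms, of "-1"] by simp
lemma X_diff: "x \<in> X \<Longrightarrow> y \<in> X \<Longrightarrow> x - y \<in> X"
  using X_add[of x "- y"] X_neg[of y] by simp

lemma S_Phi: "S \<subseteq> Phi" using base unfolding is_base_def by (elim conjE) assumption
lemma finS: "finite S" using S_Phi finPhi by (rule finite_subset)
lemma indepS: "independent S" using base unfolding is_base_def by (elim conjE) assumption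
lemma Phi_pm: "Phi \<subseteq> nnzspan S \<union> uminus ` nnzspan S" using base unfolding is_base_def by (elim conjE) assumption

lemma nn_coef:
  assumes "x \<in> nnzspan S"
  obtains c :: "'a \<Rightarrow> int" where "\<forall>s\<in>S. 0 \<le> c s" "x = (\<Sum>s\<in>S. of_int (c s) *\<^sub>R s)"
proof -
  obtain F c where 1: "finite F" "F \<subseteq> S" "\<forall>b\<in>F. c b \<ge> (0::int)" "x = (\<Sum>b\<in>F. of_int (c b) *\<^sub>R b)"
    using assms unfolding nnzspan_def by auto
  show ?thesis
    by (rule that[of "\<lambda>b. if b \<in> F then c b else 0"])
       (use 1 finS in \<open>auto simp: sum_restrict_if\<close>)
qed

lemma uniq:
  assumes "(\<Sum>s\<in>S. u s *\<^sub>R s) = (\<Sum>s\<in>S. v s *\<^sub>R s)" "s \<in> S"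
  shows "u s = v s"
proof -
  have "(\<Sum>s\<in>S. (u s - v s) *\<^sub>R s) = 0"
    using assms(1) by (simp add: scaleR_diff_left sum_subtractf)
  moreover have "\<forall>c. (\<Sum>v\<in>S. c v *\<^sub>R v) = 0 \<longrightarrow> (\<forall>v\<in>S. c v = 0)"
    using indepS unfolding independent_explicit by blast
  ultimately have "\<forall>t\<in>S. (\<lambda>s. u s - v s) t = 0"
    by (elim allE[where x="\<lambda>s. u s - v s"]) simp
  then have "(\<lambda>s. u s - v s) s = 0" using assms(2) by simp
  then show ?thesis by simp
qed

lemma Phi_cases: assumes "a \<in> Phi" shows "a \<in> nnzspan S \<or> - a \<in> nnzspan S"
proof -
  have "a \<in> nnzspan S \<union> uminus ` nnzspan S" using Phi_pm assms by (rule subsetD)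
  then show ?thesis by auto
qed

lemma Phi_span: "Phi \<subseteq> span S"
proof
  fix a assume "a \<in> Phi"
  then have "a \<in> zspan S \<or> - a \<in> zspan S" using Phi_cases nnzspan_zspan by blast
  then have "a \<in> span S \<or> - a \<in> span S" using zspan_span by blast
  then show "a \<in> span S" using span_neg[of "- a" S] by auto
qed

definition pos where "pos = pos_roots Phi S"

lemma pos_Phi: "pos \<subseteq> Phi" by (auto simp: pos_def pos_roots_def)
lemma fin_pos: "finite pos" using pos_Phi finPhi by (rule finite_subset)
lemma S_pos: "S \<subseteq> pos"
proof
  fix b assume b: "b \<in> S"
  have "b \<in> nnzspan S" unfolding nnzspan_def
    by (intro CollectI exI[of _ "{b}"] exI[of _ "\<lambda>_. 1::int"]) (use b in auto)
  then show "b \<in> pos" using b S_Phi unfolding pos_def pos_roots_def by auto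
qed

lemma root_cases: "a \<in> Phi \<Longrightarrow> a \<in> pos \<or> - a \<in> pos"
  using Phi_cases[of a] neg_Phi[of a] unfolding pos_def pos_roots_def by blast

lemma neg_coef:
  assumes "a \<in> Phi" "a \<notin> pos"
  obtains c :: "'a \<Rightarrow> int" where "\<forall>s\<in>S. c s \<le> 0" "a = (\<Sum>s\<in>S. of_int (c s) *\<^sub>R s)"
proof -
  have "- a \<in> pos" using root_cases[OF assms(1)] assms(2) by blast
  then have "- a \<in> nnzspan S" by (simp add: pos_def pos_roots_def)
  then obtain c where "\<forall>s\<in>S. 0 \<le> c s" "- a = (\<Sum>s\<in>S. of_int (c s) *\<^sub>R s)" by (rule nn_coef)
  then show ?thesis
  proof (intro that[of "\<lambda>s. - c s"])
    show "\<forall>s\<in>S. - c s \<le> 0" using \<open>\<forall>s\<in>S. 0 \<le> c s\<close> by auto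
    have "a = - (\<Sum>s\<in>S. of_int (c s) *\<^sub>R s)" using \<open>- a = _\<close> by (metis minus_minus)
    also have "\<dots> = (\<Sum>s\<in>S. of_int (- c s) *\<^sub>R s)" by (simp add: sum_negf[symmetric])
    finally show "a = (\<Sum>s\<in>S. of_int (- c s) *\<^sub>R s)" .
  qed
qed

lemma pos_coef:
  assumes "a \<in> pos"
  obtains c :: "'a \<Rightarrow> int" where "\<forall>s\<in>S. 0 \<le> c s" "a = (\<Sum>s\<in>S. of_int (c s) *\<^sub>R s)"
proof -
  have "a \<in> nnzspan S" using assms by (simp add: pos_def pos_roots_def)
  then show ?thesis using that by (rule nn_coef)
qed

lemma P1:
  assumes b: "b \<in> S" and a: "a \<in> pos" and ab: "a \<noteq> b"
  shows "sr b a \<in> pos" "sr b a \<noteq> b"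
proof -
  obtain c where c: "\<forall>s\<in>S. 0 \<le> c s" "a = (\<Sum>s\<in>S. of_int (c s) *\<^sub>R s)" using pos_coef[OF a] .
  have aP: "a \<in> Phi" "b \<in> Phi" using a b pos_Phi S_Phi by auto
  have "\<exists>t\<in>S. t \<noteq> b \<and> c t > 0"
  proof (rule ccontr)
    assume "\<not> ?thesis"
    then have z: "\<forall>t\<in>S. t \<noteq> b \<longrightarrow> c t = 0" using c(1) by force
    have "a = (\<Sum>s\<in>S. (if s = b then of_int (c b) *\<^sub>R b else 0))"
      unfolding c(2) by (rule sum.cong) (auto simp: z)
    also have "\<dots> = of_int (c b) *\<^sub>R b" using b finS by simp
    finally have ab: "a = of_int (c b) *\<^sub>R b" .
    then have "of_int (c b) *\<^sub>R b \<in> Phi" using aP by simp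
    then have "real_of_int (c b) = 1 \<or> real_of_int (c b) = -1" using reduced aP by blast
    then have "c b = 1" using c(1) b by auto
    then show False using ab \<open>a \<noteq> b\<close> by simp
  qed
  then obtain t where t: "t \<in> S" "t \<noteq> b" "c t > 0" by blast
  obtain k where k: "pair a b = of_int k" using int_pair_roots[OF aP] Ints_cases by blast
  define c' where "c' s = (if s = b then c b - k else c s)" for s
  have sb: "sr b a = (\<Sum>s\<in>S. of_int (c' s) *\<^sub>R s)"
  proof -
    have "(\<Sum>s\<in>S. of_int (c' s) *\<^sub>R s) = (\<Sum>s\<in>S. of_int (c s) *\<^sub>R s - (if s = b then of_int k *\<^sub>R b else 0))"
      by (rule sum.cong) (auto simp: c'_def scaleR_diff_left)
    also have "\<dots> = a - of_int k *\<^sub>R b" using b finS by (simp add: sum_subtractf c(2))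
    finally show ?thesis by (simp add: sr_def k)
  qed
  have srP: "sr b a \<in> Phi" using sr_Phi aP by blast
  show "sr b a \<in> pos"
  proof (rule ccontr)
    assume "sr b a \<notin> pos"
    then obtain d where d: "\<forall>s\<in>S. d s \<le> 0" "sr b a = (\<Sum>s\<in>S. of_int (d s) *\<^sub>R s)"
      using neg_coef srP by blast
    have "real_of_int (c' t) = real_of_int (d t)" using uniq[of "\<lambda>s. of_int (c' s)" "\<lambda>s. of_int (d s)" t] sb d(2) t(1) by simp
    then have "c t = d t" using t(2) by (simp add: c'_def)
    then show False using t d(1) by auto
  qed
  show "sr b a \<noteq> b"
  proof
    assume "sr b a = b"
    then have "b = (\<Sum>s\<in>S. of_int (c' s) *\<^sub>R s)" using sb by simp
    moreover have "b = (\<Sum>s\<in>S. of_int (if s = b then 1 else 0) *\<^sub>R s)"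
    proof -
      have "(\<Sum>s\<in>S. of_int (if s = b then 1 else 0) *\<^sub>R s) = (\<Sum>s\<in>S. if s = b then b else 0)"
        by (rule sum.cong) auto
      also have "\<dots> = b" using b finS by simp
      finally show ?thesis by simp
    qed
    ultimately have "real_of_int (c' t) = of_int (if t = b then 1 else 0)"
      using uniq[of "\<lambda>s. of_int (c' s)" "\<lambda>s. of_int (if s = b then 1 else 0)" t] t(1) by simp
    then show False using t by (simp add: c'_def)
  qed
qed

end


context RD begin

lemma sum_pos_sr:
  assumes b: "b \<in> S"
  shows "pair (\<Sum>a\<in>pos. a) b = 2"
proof -
  have bP: "b \<in> pos" using b S_pos by blast
  have bnz: "b \<noteq> 0" using b S_Phi Phi_nz by blast
  define Q where "Q = pos - {b}"
  have finQ: "finite Q" using fin_pos by (simp add: Q_def)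
  have posQ: "pos = insert b Q" "b \<notin> Q" using bP by (auto simp: Q_def)
  have img: "sr b ` Q \<subseteq> Q" using P1[OF b] by (auto simp: Q_def)
  have inj: "inj_on (sr b) Q"
    by (rule inj_on_inverseI[where g="sr b"]) (simp add: sr_invol[OF bnz])
  have eqQ: "sr b ` Q = Q" using endo_inj_surj[OF finQ img inj] .
  have "(\<Sum>a\<in>Q. sr b a) = (\<Sum>a\<in>sr b ` Q. a)"
    using sum.reindex[OF inj, of id] by simp
  also have "\<dots> = (\<Sum>a\<in>Q. a)" using eqQ by simp
  finally have sQ: "(\<Sum>a\<in>Q. sr b a) = (\<Sum>a\<in>Q. a)" .
  have sbb: "sr b b = - b" using bnz by (simp add: sr_def pair_self scaleR_2)
  have "sr b (\<Sum>a\<in>pos. a) = (\<Sum>a\<in>pos. sr b a)" by (rule sr_sum)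
  also have "\<dots> = - b + (\<Sum>a\<in>Q. a)" using finQ posQ sQ sbb by simp
  also have "\<dots> = (\<Sum>a\<in>pos. a) - 2 *\<^sub>R b" using finQ posQ by (simp add: scaleR_2)
  finally have "(\<Sum>a\<in>pos. a) - pair (\<Sum>a\<in>pos. a) b *\<^sub>R b = (\<Sum>a\<in>pos. a) - 2 *\<^sub>R b"
    by (simp add: sr_def)
  then have "pair (\<Sum>a\<in>pos. a) b *\<^sub>R b = 2 *\<^sub>R b" by simp
  then show ?thesis using bnz by (simp add: scaleR_cancel_right)
qed

lemma rho_pos: "rho Phi S = (1/2) *\<^sub>R (\<Sum>a\<in>pos. a)"
  by (simp add: rho_def pos_def)

lemma pair_rho_simple: "b \<in> S \<Longrightarrow> pair (rho Phi S) b = 1"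
  unfolding rho_pos pair_scale using sum_pos_sr by simp

lemma pair_rho_int: assumes a: "a \<in> Phi" shows "pair (rho Phi S) a \<in> \<int>"
proof -
  have "\<forall>a\<in>S. \<exists>w. w \<in> X \<and> (\<forall>b\<in>S. pair w b = (if b = a then 1 else 0))"
    using sc unfolding sc_derived_def by blast
  then obtain om where om: "\<And>a. a \<in> S \<Longrightarrow> om a \<in> X \<and> (\<forall>b\<in>S. pair (om a) b = (if b = a then 1 else 0))"
    by metis
  define w where "w = (\<Sum>a\<in>S. om a)"
  have wX: "w \<in> X" unfolding w_def using om by (intro X_sum) blast
  have pw: "pair w b = 1" if b: "b \<in> S" for b
  proof -
    have "pair w b = (\<Sum>a\<in>S. pair (om a) b)" by (simp add: w_def pair_sum)
    also have "\<dots> = (\<Sum>a\<in>S. if b = a then 1 else 0)"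
      by (rule sum.cong) (use om b in auto)
    also have "\<dots> = 1" using b finS by simp
    finally show ?thesis .
  qed
  define d where "d = rho Phi S - w"
  have "orthogonal d y" if y: "y \<in> S" for y
  proof -
    have "pair d y = 0" using pw[OF y] pair_rho_simple[OF y] by (simp add: d_def pair_diff)
    moreover have "y \<noteq> 0" using y S_Phi Phi_nz by blast
    ultimately show ?thesis by (simp add: pair_def orthogonal_def)
  qed
  then have "orthogonal d a" using Phi_span a orthogonal_to_span by blast
  then have "pair d a = 0" by (simp add: pair_def orthogonal_def)
  then have "pair (rho Phi S) a = pair w a" by (simp add: d_def pair_diff)
  then show ?thesis using int_pair[OF wX a] by simp
qed

end



lemma gen_comp: "g \<in> gen_group G \<Longrightarrow> h \<in> gen_group G \<Longrightarrow> g \<circ> h \<in> gen_group G"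
  by (induction g rule: gen_group.induct) (auto simp: comp_assoc intro: gen_group.intros)

lemma gen_gen: "g \<in> G \<Longrightarrow> g \<in> gen_group G"
  using gen_group.gen_step[OF _ gen_group.gen_id, of g G] by simp

context RD begin

lemma Wp_cases: "r \<in> {aff_refl a (of_int m * real p) | a m. a \<in> Phi} \<Longrightarrow>
   \<exists>a m. a \<in> Phi \<and> r = aff_refl a (of_int m * real p)"
  by blast

lemma Wp_bij: "g \<in> Wp Phi p \<Longrightarrow> bij g"
  unfolding Wp_def
proof (induction g rule: gen_group.induct)
  case gen_id then show ?case by (rule bij_id)
next
  case (gen_step r w)
  obtain a m where a: "a \<in> Phi" "r = aff_refl a (of_int m * real p)" using Wp_cases[OF gen_step(1)] by blast
  have "bij r" unfolding a(2)
    by (rule o_bij[where g="aff_refl a (of_int m * real p)"]) (auto simp: aff_refl_invol Phi_nz[OF a(1)])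
  then show ?case using gen_step(3) by (rule bij_comp[rotated])
qed

lemma Wp_pull:
  assumes "g \<in> Wp Phi p"
  shows "\<forall>a\<in>Phi. \<forall>m::int. \<exists>b\<in>Phi. \<exists>n::int. \<forall>x. pair (g x) a - of_int m * real p = pair x b - of_int n * real p"
  using assms unfolding Wp_def
proof (induction g rule: gen_group.induct)
  case gen_id then show ?case by auto
next
  case (gen_step r w)
  obtain c k where c: "c \<in> Phi" "r = aff_refl c (of_int k * real p)" using Wp_cases[OF gen_step(1)] by blast
  show ?case
  proof (intro ballI allI)
    fix a m assume a: "a \<in> Phi"
    obtain j where j: "pair c a = of_int j" using int_pair_roots[OF c(1) a] Ints_cases by blast
    have sa: "sr c a \<in> Phi" using sr_Phi c a by blast
    obtain b n where bn: "b \<in> Phi" "\<forall>x. pair (w x) (sr c a) - of_int (m - k * j) * real p = pair x b - of_int n * real p"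
      using gen_step(3) sa by blast
    have "pair ((r \<circ> w) x) a - of_int m * real p = pair x b - of_int n * real p" for x
    proof -
      have "pair ((r \<circ> w) x) a - of_int m * real p = pair (w x) (sr c a) - (of_int m * real p - of_int k * real p * pair c a)"
        using pair_aff_refl[OF Phi_nz[OF c(1)]] c(2) by simp
      also have "\<dots> = pair (w x) (sr c a) - of_int (m - k * j) * real p" by (simp add: j algebra_simps)
      finally show ?thesis using bn(2) by simp
    qed
    then show "\<exists>b\<in>Phi. \<exists>n::int. \<forall>x. pair ((r \<circ> w) x) a - of_int m * real p = pair x b - of_int n * real p"
      using bn(1) by blast
  qed
qed

lemma Wp_conj:
  assumes "g \<in> Wp Phi p" and c: "c \<in> Phi"
  shows "\<exists>b j. b \<in> Phi \<and> g \<circ> aff_refl c (of_int k * real p) = aff_refl b (of_int j * real p) \<circ> g"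
  using assms(1) unfolding Wp_def
proof (induction g rule: gen_group.induct)
  case gen_id then show ?case using c by auto
next
  case (gen_step r w)
  obtain d l where d: "d \<in> Phi" "r = aff_refl d (of_int l * real p)" using Wp_cases[OF gen_step(1)] by blast
  obtain b j where bj: "b \<in> Phi" "w \<circ> aff_refl c (of_int k * real p) = aff_refl b (of_int j * real p) \<circ> w"
    using gen_step(3) by blast
  obtain i where i: "pair d b = of_int i" using int_pair_roots[OF d(1) bj(1)] Ints_cases by blast
  have dnz: "d \<noteq> 0" using Phi_nz d by blast
  have "r \<circ> w \<circ> aff_refl c (of_int k * real p) = aff_refl (sr d b) (of_int (j - l * i) * real p) \<circ> (r \<circ> w)"
  proof
    fix x
    have "(r \<circ> w \<circ> aff_refl c (of_int k * real p)) x = r (aff_refl b (of_int j * real p) (w x))"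
      using fun_cong[OF bj(2), of x] by simp
    also have "\<dots> = r (aff_refl b (of_int j * real p) (r (r (w x))))"
      using d(2) aff_refl_invol[OF dnz] by simp
    also have "\<dots> = aff_refl (sr d b) (of_int j * real p - of_int l * real p * pair d b) (r (w x))"
      unfolding d(2) by (rule aff_conj[OF dnz])
    also have "\<dots> = (aff_refl (sr d b) (of_int (j - l * i) * real p) \<circ> (r \<circ> w)) x"
      by (simp add: i algebra_simps)
    finally show "(r \<circ> w \<circ> aff_refl c (of_int k * real p)) x = (aff_refl (sr d b) (of_int (j - l * i) * real p) \<circ> (r \<circ> w)) x" .
  qed
  then show ?case using sr_Phi[OF d(1) bj(1)] by blast
qed

lemma Wp_X:
  assumes "g \<in> Wp Phi p"
  shows "\<forall>y. y - rho Phi S \<in> X \<longrightarrow> g y - rho Phi S \<in> X"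
  using assms unfolding Wp_def
proof (induction g rule: gen_group.induct)
  case gen_id then show ?case by simp
next
  case (gen_step r w)
  obtain c k where c: "c \<in> Phi" "r = aff_refl c (of_int k * real p)" using Wp_cases[OF gen_step(1)] by blast
  show ?case
  proof (intro allI impI)
    fix y assume y: "y - rho Phi S \<in> X"
    define z where "z = w y"
    have z: "z - rho Phi S \<in> X" using gen_step(3) y by (simp add: z_def)
    have cX: "c \<in> X" using c Phi_X by blast
    have "pair z c = pair (z - rho Phi S) c + pair (rho Phi S) c" by (simp add: pair_diff)
    then have pz: "pair z c \<in> \<int>" using int_pair[OF z c(1)] pair_rho_int[OF c(1)] by simp
    have e: "r z - rho Phi S = (z - rho Phi S) + (of_int k * real p - pair z c) *\<^sub>R c"
      by (simp add: c(2) aff_refl_def algebra_simps)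
    have "of_int k * real p - pair z c \<in> \<int>" using pz by (simp add: Ints_diff)
    then have "(of_int k * real p - pair z c) *\<^sub>R c \<in> X" using X_scale[OF cX] by blast
    then have "(z - rho Phi S) + (of_int k * real p - pair z c) *\<^sub>R c \<in> X" by (rule X_add[OF z])
    then have "r z - rho Phi S \<in> X" by (simp only: e)
    then show "(r \<circ> w) y - rho Phi S \<in> X" by (simp add: z_def)
  qed
qed

end

lemma WIp_disp:
  assumes "g \<in> WIp I p"
  shows "\<forall>y. g y - y \<in> span I"
  using assms unfolding WIp_def
proof (induction g rule: gen_group.induct)
  case gen_id then show ?case by (simp add: span_zero)
next
  case (gen_step r w)
  have r: "r y - y \<in> span I" for y
  proof -
    from gen_step(1) consider (R) a where "a \<in> I" "r = aff_refl a 0"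
      | (T) a m where "a \<in> I" "r = transl ((of_int m * real p) *\<^sub>R a)" by blast
    then show ?thesis
    proof cases
      case R
      then have "r y - y = (- pair y a) *\<^sub>R a" by (simp add: aff_refl_def)
      then show ?thesis using R(1) span_scale span_base by metis
    next
      case T
      then have "r y - y = (of_int m * real p) *\<^sub>R a" by (simp add: transl_def)
      then show ?thesis using T(1) span_scale span_base by metis
    qed
  qed
  show ?case
  proof
    fix y
    have "(r \<circ> w) y - y = (r (w y) - w y) + (w y - y)" by simp
    then show "(r \<circ> w) y - y \<in> span I" using r gen_step(3) by (metis span_add)
  qed
qed




lemma transl_add: "transl (x + y) = transl x \<circ> transl y"
  by (auto simp: transl_def algebra_simps)

lemma aff_refl_neg: "aff_refl (- b) k = aff_refl b (- k)"
  by (auto simp: aff_refl_def pair_neg2)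

lemma aff_refl_transl: "aff_refl b k = transl (k *\<^sub>R b) \<circ> aff_refl b 0"
  by (auto simp: aff_refl_def transl_def)

context RD begin

lemma coef_I:
  assumes I: "I \<subseteq> S" and sp: "x \<in> span I" and x: "x = (\<Sum>s\<in>S. u s *\<^sub>R s)"
    and s: "s \<in> S" "s \<notin> I"
  shows "u s = 0"
proof -
  have finI: "finite I" using I finS finite_subset by blast
  obtain v where v: "x = (\<Sum>t\<in>I. v t *\<^sub>R t)" using sp span_finite[OF finI] by blast
  have "(\<Sum>t\<in>S. (if t \<in> I then v t else 0) *\<^sub>R t) = (\<Sum>t\<in>S. if t \<in> I then v t *\<^sub>R t else 0)"
    by (rule sum.cong) auto
  also have "\<dots> = (\<Sum>t\<in>S \<inter> I. v t *\<^sub>R t)" using finS by (simp add: sum.inter_restrict)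
  also have "S \<inter> I = I" using I by blast
  finally have "x = (\<Sum>t\<in>S. (if t \<in> I then v t else 0) *\<^sub>R t)" using v by simp
  then have "u s = (if s \<in> I then v s else 0)" using uniq[of u "\<lambda>t. if t \<in> I then v t else 0" s] x s(1) by simp
  then show ?thesis using s(2) by simp
qed

lemma pos_span_zspan:
  assumes I: "I \<subseteq> S" and b: "b \<in> pos" and sp: "b \<in> span I"
  shows "b \<in> zspan I"
proof -
  obtain c where c: "\<forall>s\<in>S. 0 \<le> c s" "b = (\<Sum>s\<in>S. of_int (c s) *\<^sub>R s)" using pos_coef[OF b] .
  have z: "c s = 0" if "s \<in> S" "s \<notin> I" for s
    using coef_I[OF I sp c(2) that] by simp
  have "b = (\<Sum>s\<in>S. if s \<in> I then of_int (c s) *\<^sub>R s else 0)"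
    unfolding c(2) by (rule sum.cong) (auto simp: z)
  also have "\<dots> = (\<Sum>s\<in>S \<inter> I. of_int (c s) *\<^sub>R s)" using finS by (simp add: sum.inter_restrict)
  also have "S \<inter> I = I" using I by blast
  finally have "b = (\<Sum>s\<in>I. of_int (c s) *\<^sub>R s)" .
  moreover have "finite I" using I finS finite_subset by blast
  ultimately show ?thesis unfolding zspan_def
    by (intro CollectI exI[of _ I] exI[of _ c]) simp
qed

lemma transl_WIp:
  assumes "x \<in> zspan I"
  shows "transl ((of_int j * real p) *\<^sub>R x) \<in> WIp I p"
proof -
  obtain F c where F: "finite F" "F \<subseteq> I" "x = (\<Sum>b\<in>F. of_int (c b) *\<^sub>R b)"
    using assms unfolding zspan_def by auto
  have "(of_int j * real p) *\<^sub>R x = (\<Sum>b\<in>F. (of_int (j * c b) * real p) *\<^sub>R b)"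
    unfolding F(3) scaleR_sum_right by (rule sum.cong) (auto simp: algebra_simps)
  moreover have "transl (\<Sum>b\<in>G. (of_int (j * c b) * real p) *\<^sub>R b) \<in> WIp I p" if "finite G" "G \<subseteq> I" for G
    using that
  proof (induction G rule: finite_induct)
    case empty
    have e: "transl (\<Sum>b\<in>{}. (of_int (j * c b) * real p) *\<^sub>R b) = id" by (auto simp: transl_def)
    show ?case unfolding e WIp_def by (rule gen_group.gen_id)
  next
    case (insert b G)
    have 1: "transl ((of_int (j * c b) * real p) *\<^sub>R b) \<in> WIp I p"
      unfolding WIp_def using insert(4) by (intro gen_gen) blast
    have 2: "transl (\<Sum>b\<in>G. (of_int (j * c b) * real p) *\<^sub>R b) \<in> WIp I p"
      using insert(3,4) by simp
    show ?case unfolding sum.insert[OF insert(1,2)] transl_add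
      using 1 2 unfolding WIp_def by (rule gen_comp)
  qed
  ultimately show ?thesis using F by simp
qed

lemma refl_WIp_lin:
  assumes I: "I \<subseteq> S"
  shows "\<forall>b c. b \<in> pos \<and> b \<in> span I \<and> b = (\<Sum>s\<in>S. of_int (c s) *\<^sub>R s) \<and> (\<forall>s\<in>S. 0 \<le> c s)
          \<and> nat (\<Sum>s\<in>S. c s) = n \<longrightarrow> aff_refl b 0 \<in> WIp I p"
proof (induction n rule: less_induct)
  case (less n)
  show ?case
  proof (intro allI impI, elim conjE)
    fix b and c :: "'a \<Rightarrow> int"
    assume b: "b \<in> pos" and sp: "b \<in> span I" and bc: "b = (\<Sum>s\<in>S. of_int (c s) *\<^sub>R s)"
      and c0: "\<forall>s\<in>S. 0 \<le> c s" and n: "nat (\<Sum>s\<in>S. c s) = n"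
    show "aff_refl b 0 \<in> WIp I p"
    proof (cases "b \<in> I")
      case True
      then show ?thesis unfolding WIp_def by (intro gen_gen) blast
    next
      case False
      have bP: "b \<in> Phi" using b pos_Phi by blast
      have bnz: "b \<noteq> 0" using bP Phi_nz by blast
      have "0 < inner b b" using bnz by simp
      also have "inner b b = (\<Sum>s\<in>S. of_int (c s) * inner s b)"
        by (subst (1) bc) (simp add: inner_sum_left)
      finally have pos_sum: "0 < (\<Sum>s\<in>S. of_int (c s) * inner s b)" .
      have "\<exists>s\<in>S. 0 < of_int (c s) * inner s b"
      proof (rule ccontr)
        assume "\<not> ?thesis"
        then have "\<forall>s\<in>S. of_int (c s) * inner s b \<le> 0" by (simp add: not_less)
        then have "(\<Sum>s\<in>S. of_int (c s) * inner s b) \<le> 0" by (simp add: sum_nonpos)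
        then show False using pos_sum by simp
      qed
      then obtain a where a: "a \<in> S" "0 < of_int (c a) * inner a b" by blast
      have ca: "c a > 0" and ab: "inner a b > 0"
        using a(2) c0 a(1) by (auto simp: zero_less_mult_iff)
      have aI: "a \<in> I"
        using coef_I[OF I sp bc a(1)] ca by auto
      have aP: "a \<in> Phi" using a(1) S_Phi by blast
      have anz: "a \<noteq> 0" using aP Phi_nz by blast
      obtain j where j: "pair b a = of_int j" using int_pair_roots[OF bP aP] Ints_cases by blast
      have "pair b a > 0" using ab anz by (simp add: pair_def inner_commute)
      then have j1: "j \<ge> 1" using j by simp
      have ba: "b \<noteq> a" using False aI by blast
      define b' where "b' = sr a b"
      have b'pos: "b' \<in> pos" unfolding b'_def using P1(1)[OF a(1) b ba] .
      obtain d where d: "\<forall>s\<in>S. 0 \<le> d s" "b' = (\<Sum>s\<in>S. of_int (d s) *\<^sub>R s)" using pos_coef[OF b'pos] .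
      have b'2: "b' = (\<Sum>s\<in>S. of_int (c s - (if s = a then j else 0)) *\<^sub>R s)"
      proof -
        have "(\<Sum>s\<in>S. of_int (c s - (if s = a then j else 0)) *\<^sub>R s)
            = (\<Sum>s\<in>S. of_int (c s) *\<^sub>R s - (if s = a then of_int j *\<^sub>R a else 0))"
          by (rule sum.cong) (auto simp: scaleR_diff_left)
        also have "\<dots> = b - of_int j *\<^sub>R a" using a(1) finS by (simp add: sum_subtractf bc)
        finally show ?thesis by (simp add: b'_def sr_def j)
      qed
      have dc: "d s = c s - (if s = a then j else 0)" if "s \<in> S" for s
        using uniq[of "\<lambda>s. of_int (d s)" "\<lambda>s. of_int (c s - (if s = a then j else 0))" s] d(2) b'2 that
        by simp
      have "(\<Sum>s\<in>S. d s) = (\<Sum>s\<in>S. c s - (if s = a then j else 0))"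
        by (rule sum.cong) (auto simp: dc)
      also have "\<dots> = (\<Sum>s\<in>S. c s) - j" using a(1) finS by (simp add: sum_subtractf)
      finally have sd: "(\<Sum>s\<in>S. d s) = (\<Sum>s\<in>S. c s) - j" .
      have "0 \<le> (\<Sum>s\<in>S. d s)" using d(1) by (simp add: sum_nonneg)
      then have lt: "nat (\<Sum>s\<in>S. d s) < n" using sd j1 n by linarith
      have b'sp: "b' \<in> span I" unfolding b'_def sr_def
        by (rule span_diff[OF sp span_scale[OF span_base[OF aI]]])
      have IH: "aff_refl b' 0 \<in> WIp I p"
        using less[OF lt, rule_format, of b' d] b'pos b'sp d by simp
      have gen_a: "aff_refl a 0 \<in> WIp I p" unfolding WIp_def using aI by (intro gen_gen) blast
      have sab: "sr a b' = b" unfolding b'_def by (rule sr_invol[OF anz])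
      have "(aff_refl a 0 \<circ> aff_refl b' 0 \<circ> aff_refl a 0) x = aff_refl b 0 x" for x
        using aff_conj[OF anz, of 0 b' 0 x] sab by simp
      then have eq: "aff_refl b 0 = aff_refl a 0 \<circ> aff_refl b' 0 \<circ> aff_refl a 0" by (intro ext) simp
      have "aff_refl a 0 \<circ> aff_refl b' 0 \<in> WIp I p"
        using gen_a IH unfolding WIp_def by (rule gen_comp)
      then have "aff_refl a 0 \<circ> aff_refl b' 0 \<circ> aff_refl a 0 \<in> WIp I p"
        using gen_a unfolding WIp_def by (rule gen_comp)
      then show ?thesis unfolding eq .
    qed
  qed
qed

lemma refl_WIp:
  assumes I: "I \<subseteq> S" and b: "b \<in> Phi" and sp: "b \<in> span I"
  shows "aff_refl b (of_int j * real p) \<in> WIp I p"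
proof -
  have gen: "aff_refl a (of_int i * real p) \<in> WIp I p" if a: "a \<in> pos" "a \<in> span I" for a i
  proof -
    obtain c where c: "\<forall>s\<in>S. 0 \<le> c s" "a = (\<Sum>s\<in>S. of_int (c s) *\<^sub>R s)" using pos_coef[OF a(1)] .
    have 1: "aff_refl a 0 \<in> WIp I p" using refl_WIp_lin[OF I, rule_format, of a c] a c by simp
    have 2: "transl ((of_int i * real p) *\<^sub>R a) \<in> WIp I p"
      by (rule transl_WIp[OF pos_span_zspan[OF I a]])
    have "transl ((of_int i * real p) *\<^sub>R a) \<circ> aff_refl a 0 \<in> WIp I p"
      using 2 1 unfolding WIp_def by (rule gen_comp)
    then show ?thesis unfolding aff_refl_transl[of a "of_int i * real p"] .
  qed
  consider "b \<in> pos" | "- b \<in> pos" using root_cases[OF b] by blast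
  then show ?thesis
  proof cases
    case 1 show ?thesis using gen[OF 1 sp, of j] by simp
  next
    case 2
    have "- b \<in> span I" using sp by (rule span_neg)
    then have "aff_refl (- b) (of_int (- j) * real p) \<in> WIp I p" using gen[OF 2] by blast
    then show ?thesis by (simp add: aff_refl_neg)
  qed
qed

end



lemma pair_aff_refl_self: "c \<noteq> 0 \<Longrightarrow> pair (aff_refl c K x) c = 2 * K - pair x c"
  by (simp add: aff_refl_def pair_add pair_diff pair_scale pair_self)

context RD begin

definition Cs where "Cs = {y. \<forall>a\<in>pos. 0 < pair y a \<and> pair y a < real p}"

lemma int_strict: "0 < of_int m * real p \<Longrightarrow> of_int m * real p < real p \<Longrightarrow> False"
proof -
  assume 1: "0 < of_int m * real p" and 2: "of_int m * real p < real p"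
  have pp: "real p > 0" using ppos by simp
  from 1 pp have "of_int m > (0::real)" by (simp add: zero_less_mult_iff)
  then have "m \<ge> 1" by simp
  then have "of_int m * real p \<ge> 1 * real p" using pp by (intro mult_right_mono) auto
  then show False using 2 by simp
qed

lemma AV: assumes y: "y \<in> Cs" and a: "a \<in> Phi" shows "pair y a \<noteq> of_int m * real p"
proof
  assume eq: "pair y a = of_int m * real p"
  consider "a \<in> pos" | "- a \<in> pos" using root_cases[OF a] by blast
  then show False
  proof cases
    case 1
    then have "0 < pair y a \<and> pair y a < real p" using y by (auto simp: Cs_def)
    then show False using eq int_strict[of m] by simp
  next
    case 2
    then have "0 < pair y (- a) \<and> pair y (- a) < real p" using y by (auto simp: Cs_def)
    then have "0 < of_int (- m) * real p \<and> of_int (- m) * real p < real p" using eq by (simp add: pair_neg2)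
    then show False using int_strict[of "- m"] by blast
  qed
qed

lemma convex_Cs:
  assumes L: "L \<in> Cs" and Z: "\<forall>a\<in>pos. 0 \<le> pair Z a \<and> pair Z a \<le> real p"
    and t: "0 \<le> t" "t < 1"
  shows "(1 - t) *\<^sub>R L + t *\<^sub>R Z \<in> Cs"
  unfolding Cs_def
proof (intro CollectI ballI conjI)
  fix a assume a: "a \<in> pos"
  have L1: "0 < pair L a" "pair L a < real p" using L a by (auto simp: Cs_def)
  have Z1: "0 \<le> pair Z a" "pair Z a \<le> real p" using Z a by auto
  have e: "pair ((1 - t) *\<^sub>R L + t *\<^sub>R Z) a = (1 - t) * pair L a + t * pair Z a"
    by (simp add: pair_add pair_scale)
  have A: "0 < (1 - t) * pair L a" using t L1 by simp
  have B: "0 \<le> t * pair Z a" using t Z1 by simp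
  show "0 < pair ((1 - t) *\<^sub>R L + t *\<^sub>R Z) a" unfolding e using A B by simp
  have C: "(1 - t) * pair L a < (1 - t) * real p" using t L1 by simp
  have D: "t * pair Z a \<le> t * real p" using t Z1 by (simp add: mult_left_mono)
  show "pair ((1 - t) *\<^sub>R L + t *\<^sub>R Z) a < real p" unfolding e using C D by (simp add: algebra_simps)
qed

lemma SEG:
  assumes L: "L \<in> Cs" and Z: "\<forall>a\<in>pos. 0 \<le> pair Z a \<and> pair Z a \<le> real p"
    and b: "b \<in> Phi" and nz: "pair Z b - of_int n * real p \<noteq> 0"
  shows "(pair L b - of_int n * real p) * (pair Z b - of_int n * real p) > 0"
proof (rule ccontr)
  define A where "A = pair L b - of_int n * real p"
  define B where "B = pair Z b - of_int n * real p"
  assume "\<not> ?thesis"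
  then have AB: "A * B \<le> 0" by (simp add: A_def B_def)
  have A0: "A \<noteq> 0" using AV[OF L b, of n] by (simp add: A_def)
  have B0: "B \<noteq> 0" using nz by (simp add: B_def)
  have "A * B < 0" using AB A0 B0 by (simp add: order_le_less)
  then have sgn: "(A > 0 \<and> B < 0) \<or> (A < 0 \<and> B > 0)" by (simp add: mult_less_0_iff)
  define t where "t = A / (A - B)"
  have t0: "0 < t" and t1: "t < 1" using sgn by (auto simp: t_def divide_simps)
  have yC: "(1 - t) *\<^sub>R L + t *\<^sub>R Z \<in> Cs" using convex_Cs[OF L Z] t0 t1 by simp
  have "pair ((1 - t) *\<^sub>R L + t *\<^sub>R Z) b - of_int n * real p = (1 - t) * A + t * B"
    by (simp add: pair_add pair_diff pair_scale A_def B_def algebra_simps)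
  also have "\<dots> = 0" using sgn by (auto simp: t_def divide_simps algebra_simps)
  finally show False using AV[OF yC b, of n] by simp
qed

lemma WALL:
  assumes c: "c \<in> Phi" and b: "b \<in> Phi"
    and hull: "affine hull ({x. pair (x + rho Phi S) c = of_int k * real p} \<inter> alcove_cl Phi S p)
        = {x. pair (x + rho Phi S) c = of_int k * real p}"
    and ne: "\<not> ((b = c \<and> n = k) \<or> (b = - c \<and> n = - k))"
  shows "\<exists>z. pair (z + rho Phi S) c = of_int k * real p \<and> z \<in> alcove_cl Phi S p
             \<and> pair (z + rho Phi S) b \<noteq> of_int n * real p"
proof (rule ccontr)
  assume "\<not> ?thesis"
  then have sub: "{x. pair (x + rho Phi S) c = of_int k * real p} \<inter> alcove_cl Phi S p
      \<subseteq> {x. pair (x + rho Phi S) b = of_int n * real p}" by blast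
  have bnz: "b \<noteq> 0" and cnz: "c \<noteq> 0" using b c Phi_nz by auto
  have Hb: "{x. pair (x + rho Phi S) b = of_int n * real p}
      = {x. inner ((2 / inner b b) *\<^sub>R b) x = of_int n * real p - pair (rho Phi S) b}"
    by (auto simp: pair_add pair_def inner_commute add_divide_distrib algebra_simps)
  have aff: "affine {x. pair (x + rho Phi S) b = of_int n * real p}"
    unfolding Hb by (rule affine_hyperplane)
  have H: "{x. pair (x + rho Phi S) c = of_int k * real p} \<subseteq> {x. pair (x + rho Phi S) b = of_int n * real p}"
    using hull_minimal[of _ _ affine, OF sub aff] hull by simp
  define x0 where "x0 = (of_int k * real p / 2) *\<^sub>R c - rho Phi S"
  have x0c: "pair (x0 + rho Phi S) c = of_int k * real p" using cnz by (simp add: x0_def pair_scale pair_self)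
  have perp: "inner u b = 0" if u: "inner u c = 0" for u
  proof -
    have "pair (x0 + u + rho Phi S) c = of_int k * real p"
      using x0c u by (simp add: pair_add pair_def algebra_simps)
    then have 1: "pair (x0 + u + rho Phi S) b = of_int n * real p" using H by blast
    have 2: "pair (x0 + rho Phi S) b = of_int n * real p" using H x0c by blast
    have "pair u b = 0" using 1 2 by (simp add: pair_add algebra_simps)
    then show ?thesis using bnz by (simp add: pair_def)
  qed
  define t where "t = inner b c / inner c c"
  define u where "u = b - t *\<^sub>R c"
  have uc: "inner u c = 0" using cnz by (simp add: u_def t_def inner_diff_left)
  have ub: "inner u b = 0" using perp[OF uc] .
  have "inner u u = inner u b - t * inner u c" by (simp add: u_def inner_diff_right)
  then have "inner u u = 0" using ub uc by simp
  then have "u = 0" by simp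
  then have bt: "b = t *\<^sub>R c" by (simp add: u_def)
  then have "t = 1 \<or> t = -1" using reduced[OF c] b by simp
  then have bc: "b = c \<or> b = - c" using bt by auto
  have "pair (x0 + rho Phi S) b = of_int n * real p" using H x0c by blast
  then have "(b = c \<and> of_int k * real p = of_int n * real p) \<or> (b = - c \<and> - (of_int k * real p) = of_int n * real p)"
    using bc x0c by (auto simp: pair_neg2)
  then show False
  proof
    assume h: "b = c \<and> of_int k * real p = of_int n * real p"
    then have "n = k" using ppos by simp
    then show False using ne h by blast
  next
    assume h: "b = - c \<and> - (of_int k * real p) = of_int n * real p"
    then have "(of_int n + of_int k) * real p = 0" by (simp add: algebra_simps)
    then have "of_int n + of_int k = (0::real)" using ppos by simp
    then have "n = - k" by linarith
    then show False using ne h by blast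
  qed
qed

end



lemma pair_aff_refl_gen: "pair (aff_refl b K u) a = pair u a - pair u b * pair b a + K * pair b a"
  by (simp add: aff_refl_def pair_add pair_diff pair_scale)

lemma sign3: "(A::real) * B > 0 \<Longrightarrow> A' * B > 0 \<Longrightarrow> A * A' > 0"
  by (auto simp: zero_less_mult_iff)

context RD begin

lemma parallel:
  assumes a: "a \<in> Phi" and b: "b \<in> Phi" and h: "\<forall>u. inner u b = 0 \<longrightarrow> inner u a = 0"
  shows "a = b \<or> a = - b"
proof -
  have bnz: "b \<noteq> 0" using b Phi_nz by blast
  define t where "t = inner a b / inner b b"
  define u where "u = a - t *\<^sub>R b"
  have ub: "inner u b = 0" using bnz by (simp add: u_def t_def inner_diff_left)
  have ua: "inner u a = 0" using h ub by blast
  have "inner u u = inner u a - t * inner u b" by (simp add: u_def inner_diff_right)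
  then have "inner u u = 0" using ua ub by simp
  then have "u = 0" by simp
  then have at: "a = t *\<^sub>R b" by (simp add: u_def)
  then have "t = 1 \<or> t = -1" using reduced[OF b] a by simp
  then show ?thesis using at by auto
qed

lemma main:
  assumes I: "I \<subseteq> S"
    and sW: "s \<in> Wp Phi p" and wall: "wall_refl Phi S p s"
    and lam: "lam \<in> alcove Phi S p \<inter> X"
    and w: "w \<in> WIlam Phi S I p lam"
  shows "dot Phi S (w \<circ> s) lam \<in> alcove_I Phi S I p \<inter> X \<longleftrightarrow> w \<circ> s \<circ> inv w \<notin> WIp I p"
proof -
  have "\<exists>c\<in>Phi. \<exists>k::int. s = aff_refl c (of_int k * real p) \<and>
      affine hull ({x. pair (x + rho Phi S) c = of_int k * real p} \<inter> alcove_cl Phi S p)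
        = {x. pair (x + rho Phi S) c = of_int k * real p}"
    using wall unfolding wall_refl_def .
  then obtain c k where c: "c \<in> Phi" and sdef: "s = aff_refl c (of_int k * real p)"
    and hull: "affine hull ({x. pair (x + rho Phi S) c = of_int k * real p} \<inter> alcove_cl Phi S p)
        = {x. pair (x + rho Phi S) c = of_int k * real p}"
    by (elim bexE exE conjE)
  have cnz: "c \<noteq> 0" using c Phi_nz by blast
  define L where "L = lam + rho Phi S"
  have LC: "L \<in> Cs" using lam by (simp add: L_def Cs_def alcove_def pos_def)
  have wW: "w \<in> Wp Phi p" and wcl: "dot Phi S w lam \<in> alcove_I_cl Phi S I p"
    using w by (auto simp: WIlam_def)
  obtain \<beta> j where \<beta>: "\<beta> \<in> Phi" and conj: "w \<circ> s = aff_refl \<beta> (of_int j * real p) \<circ> w"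
    using Wp_conj[OF wW c, of k] sdef by blast
  define R where "R = aff_refl \<beta> (of_int j * real p)"
  have bnz: "\<beta> \<noteq> 0" using \<beta> Phi_nz by blast
  have bw: "bij w" using Wp_bij[OF wW] .
  then have surjw: "surj w" by (rule bij_is_surj)
  then have winv: "w \<circ> inv w = id" by (simp add: surj_iff)
  have Req: "w \<circ> s \<circ> inv w = R"
  proof -
    have "w \<circ> s \<circ> inv w = R \<circ> (w \<circ> inv w)" using conj by (simp add: R_def comp_assoc)
    then show ?thesis using winv by simp
  qed
  define y1 where "y1 = w L"
  define y0 where "y0 = w (s L)"
  have y0R: "y0 = R y1" using fun_cong[OF conj, of L] by (simp add: y0_def y1_def R_def)
  have dot0: "dot Phi S (w \<circ> s) lam + rho Phi S = y0" by (simp add: dot_def y0_def L_def)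
  have dot1: "dot Phi S w lam + rho Phi S = y1" by (simp add: dot_def y1_def L_def)
  have Y1: "pair y1 a \<noteq> of_int m * real p" if a: "a \<in> Phi" for a m
  proof -
    have "\<exists>b\<in>Phi. \<exists>n::int. \<forall>x. pair (w x) a - of_int m * real p = pair x b - of_int n * real p"
      using Wp_pull[OF wW] a by (elim ballE allE) auto
    then obtain b n where b: "b \<in> Phi" "\<forall>x. pair (w x) a - of_int m * real p = pair x b - of_int n * real p"
      by (elim bexE exE)
    have ne: "pair L b \<noteq> of_int n * real p" by (rule AV[OF LC b(1)])
    have "pair y1 a - of_int m * real p = pair L b - of_int n * real p" using b(2) by (simp add: y1_def)
    then show ?thesis using ne by auto
  qed
  have Y1': "0 < pair y1 a \<and> pair y1 a < real p" if a: "a \<in> pos" "a \<in> zspan I" for a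
  proof -
    have "\<forall>a\<in>pos_roots Phi S \<inter> zspan I. 0 \<le> pair (dot Phi S w lam + rho Phi S) a \<and> pair (dot Phi S w lam + rho Phi S) a \<le> real p"
      using wcl unfolding alcove_I_cl_def by (rule CollectD)
    then have "0 \<le> pair (dot Phi S w lam + rho Phi S) a \<and> pair (dot Phi S w lam + rho Phi S) a \<le> real p"
      using a unfolding pos_def by blast
    then have "0 \<le> pair y1 a \<and> pair y1 a \<le> real p" unfolding dot1 .
    moreover have "pair y1 a \<noteq> of_int 0 * real p" "pair y1 a \<noteq> of_int 1 * real p"
      using Y1 a pos_Phi by blast+
    ultimately show ?thesis by auto
  qed
  have Key: "(pair y0 a - of_int m * real p) * (pair y1 a - of_int m * real p) > 0"
    if RI: "R \<notin> WIp I p" and a: "a \<in> Phi" and aI: "a \<in> span I" for a m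
  proof -
    have "\<exists>b\<in>Phi. \<exists>n::int. \<forall>x. pair (w x) a - of_int m * real p = pair x b - of_int n * real p"
      using Wp_pull[OF wW] a by (elim ballE allE) auto
    then obtain b n where b: "b \<in> Phi" and bn: "\<forall>x. pair (w x) a - of_int m * real p = pair x b - of_int n * real p"
      by (elim bexE exE)
    show ?thesis
    proof (cases "(b = c \<and> n = k) \<or> (b = - c \<and> n = - k)")
      case False
      obtain z where z: "pair (z + rho Phi S) c = of_int k * real p" "z \<in> alcove_cl Phi S p"
          "pair (z + rho Phi S) b \<noteq> of_int n * real p"
        using WALL[OF c b hull False] by blast
      define Z where "Z = z + rho Phi S"
      have Zcl: "\<forall>a\<in>pos. 0 \<le> pair Z a \<and> pair Z a \<le> real p"
        using z(2) by (simp add: Z_def alcove_cl_def pos_def)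
      have sZ: "s Z = Z" using z(1) by (simp add: sdef Z_def aff_refl_alt)
      have nzZ: "pair Z b - of_int n * real p \<noteq> 0" using z(3) by (simp add: Z_def)
      have P1': "(pair L b - of_int n * real p) * (pair Z b - of_int n * real p) > 0"
        by (rule SEG[OF LC Zcl b nzZ])
      obtain i where i: "pair c b = of_int i" using int_pair_roots[OF c b] Ints_cases by blast
      have sx: "pair (s x) b - of_int n * real p = pair x (sr c b) - of_int (n - k * i) * real p" for x
        using pair_aff_refl[OF cnz, of "of_int k * real p" x b "of_int n * real p"]
        by (simp add: sdef i algebra_simps)
      have srb: "sr c b \<in> Phi" using sr_Phi[OF c b] .
      have nzZ': "pair Z (sr c b) - of_int (n - k * i) * real p \<noteq> 0"
        using sx[of Z] sZ nzZ by simp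
      have P2': "(pair L (sr c b) - of_int (n - k * i) * real p) * (pair Z (sr c b) - of_int (n - k * i) * real p) > 0"
        by (rule SEG[OF LC Zcl srb nzZ'])
      then have P2: "(pair (s L) b - of_int n * real p) * (pair Z b - of_int n * real p) > 0"
        using sx[of L] sx[of Z] sZ by simp
      have "(pair L b - of_int n * real p) * (pair (s L) b - of_int n * real p) > 0"
        using P1' P2 by (rule sign3)
      moreover have "pair y1 a - of_int m * real p = pair L b - of_int n * real p"
        using bn by (simp add: y1_def)
      moreover have "pair y0 a - of_int m * real p = pair (s L) b - of_int n * real p"
        using bn by (simp add: y0_def)
      ultimately show ?thesis by (simp add: mult.commute)
    next
      case True
      have flip: "pair (s x) b - of_int n * real p = - (pair x b - of_int n * real p)" for x
        using True pair_aff_refl_self[OF cnz, of "of_int k * real p" x]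
        by (auto simp: sdef pair_neg2 algebra_simps)
      have RR: "pair (R u) a - of_int m * real p = - (pair u a - of_int m * real p)" for u
      proof -
        obtain x where x: "u = w x" using surjD[OF surjw, of u] by (elim exE)
        have "R u = w (s x)" using fun_cong[OF conj, of x] x by (simp add: R_def)
        then have "pair (R u) a - of_int m * real p = pair (s x) b - of_int n * real p" using bn by simp
        also have "\<dots> = - (pair x b - of_int n * real p)" by (rule flip)
        also have "\<dots> = - (pair u a - of_int m * real p)" using bn x by simp
        finally show ?thesis .
      qed
      have lin: "2 * pair u a = pair \<beta> a * pair u \<beta>" for u
      proof -
        have e: "pair (R v) a = pair v a - pair v \<beta> * pair \<beta> a + of_int j * real p * pair \<beta> a" for v
          by (simp add: R_def pair_aff_refl_gen)
        have 1: "2 * pair u a - 2 * (of_int m * real p) = pair u \<beta> * pair \<beta> a - of_int j * real p * pair \<beta> a"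
          using RR[of u] e[of u] by linarith
        have r0: "pair (R 0) a - of_int m * real p = - (0 - of_int m * real p)"
          using RR[of 0] by (simp only: pair_zero)
        have e0: "pair (R 0) a = of_int j * real p * pair \<beta> a"
          using e[of 0] by (simp only: pair_zero mult_zero_left diff_zero add_0)
        have 2: "2 * (of_int m * real p) = of_int j * real p * pair \<beta> a" using r0 e0 by linarith
        have "2 * pair u a = pair u \<beta> * pair \<beta> a" using 1 2 by linarith
        then show ?thesis by (simp add: mult.commute)
      qed
      have "\<forall>u. inner u \<beta> = 0 \<longrightarrow> inner u a = 0"
      proof (intro allI impI)
        fix u assume "inner u \<beta> = 0"
        then have "pair u \<beta> = 0" by (simp add: pair_def)
        then have "pair u a = 0" using lin[of u] by simp
        then show "inner u a = 0" using a Phi_nz by (simp add: pair_def)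
      qed
      then have "a = \<beta> \<or> a = - \<beta>" using parallel[OF a \<beta>] by blast
      then have "\<beta> \<in> span I" using aI span_neg[of a I] by auto
      then have "R \<in> WIp I p" unfolding R_def by (rule refl_WIp[OF I \<beta>])
      then show ?thesis using RI by blast
    qed
  qed
  show ?thesis
  proof
    assume lhs: "dot Phi S (w \<circ> s) lam \<in> alcove_I Phi S I p \<inter> X"
    show "w \<circ> s \<circ> inv w \<notin> WIp I p"
    proof
      assume "w \<circ> s \<circ> inv w \<in> WIp I p"
      then have RW: "R \<in> WIp I p" using Req by simp
      have y0C: "0 < pair y0 a \<and> pair y0 a < real p" if "a \<in> pos" "a \<in> zspan I" for a
      proof -
        have "\<forall>a\<in>pos_roots Phi S \<inter> zspan I. 0 < pair (dot Phi S (w \<circ> s) lam + rho Phi S) a \<and> pair (dot Phi S (w \<circ> s) lam + rho Phi S) a < real p"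
          using lhs unfolding alcove_I_def by blast
        then have "0 < pair (dot Phi S (w \<circ> s) lam + rho Phi S) a \<and> pair (dot Phi S (w \<circ> s) lam + rho Phi S) a < real p"
          using that unfolding pos_def by blast
        then show ?thesis unfolding dot0 .
      qed
      have "R y1 - y1 \<in> span I" using WIp_disp[OF RW] by blast
      moreover have "R y1 - y1 = (- (pair y1 \<beta> - of_int j * real p)) *\<^sub>R \<beta>"
        by (simp add: R_def aff_refl_alt algebra_simps)
      moreover have nz: "pair y1 \<beta> - of_int j * real p \<noteq> 0" using Y1[OF \<beta>, of j] by simp
      ultimately have sp1: "(- (pair y1 \<beta> - of_int j * real p)) *\<^sub>R \<beta> \<in> span I" by simp
      have "inverse (- (pair y1 \<beta> - of_int j * real p)) *\<^sub>R ((- (pair y1 \<beta> - of_int j * real p)) *\<^sub>R \<beta>) = \<beta>"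
        using nz by simp
      then have "\<beta> \<in> span I" using span_scale[OF sp1, of "inverse (- (pair y1 \<beta> - of_int j * real p))"] by simp
      have py0: "pair y0 \<beta> = 2 * (of_int j * real p) - pair y1 \<beta>"
        using y0R bnz by (simp add: R_def pair_aff_refl_self)
      consider "\<beta> \<in> pos" | "- \<beta> \<in> pos" using root_cases[OF \<beta>] by blast
      then show False
      proof cases
        case 1
        have z: "\<beta> \<in> zspan I" using pos_span_zspan[OF I 1 \<open>\<beta> \<in> span I\<close>] .
        have "0 < pair y0 \<beta> + pair y1 \<beta> \<and> pair y0 \<beta> + pair y1 \<beta> < 2 * real p"
          using y0C[OF 1 z] Y1'[OF 1 z] by linarith
        then have "0 < of_int j * real p \<and> of_int j * real p < real p" using py0 by linarith
        then show False using int_strict by blast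
      next
        case 2
        have z: "- \<beta> \<in> zspan I" using pos_span_zspan[OF I 2 span_neg[OF \<open>\<beta> \<in> span I\<close>]] .
        have "0 < pair y0 (- \<beta>) + pair y1 (- \<beta>) \<and> pair y0 (- \<beta>) + pair y1 (- \<beta>) < 2 * real p"
          using y0C[OF 2 z] Y1'[OF 2 z] by linarith
        then have "0 < of_int (- j) * real p \<and> of_int (- j) * real p < real p"
          using py0 by (simp add: pair_neg2)
        then show False using int_strict by blast
      qed
    qed
  next
    assume "w \<circ> s \<circ> inv w \<notin> WIp I p"
    then have RI: "R \<notin> WIp I p" using Req by simp
    have gW: "w \<circ> s \<in> Wp Phi p" using wW sW unfolding Wp_def by (rule gen_comp)
    have "(w \<circ> s) L - rho Phi S \<in> X" using Wp_X[OF gW] lam by (simp add: L_def)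
    then have inX: "dot Phi S (w \<circ> s) lam \<in> X" by (simp add: dot_def L_def)
    have "0 < pair y0 a \<and> pair y0 a < real p" if a: "a \<in> pos" "a \<in> zspan I" for a
    proof -
      have aP: "a \<in> Phi" using a pos_Phi by blast
      have aI: "a \<in> span I" using a zspan_span by blast
      have k0: "(pair y0 a - of_int 0 * real p) * (pair y1 a - of_int 0 * real p) > 0"
        by (rule Key[OF RI aP aI])
      have k1: "(pair y0 a - of_int 1 * real p) * (pair y1 a - of_int 1 * real p) > 0"
        by (rule Key[OF RI aP aI])
      have y1a: "0 < pair y1 a" "pair y1 a < real p" using Y1'[OF a] by auto
      have "0 < pair y0 a" using k0 y1a by (simp add: zero_less_mult_iff)
      moreover have "pair y0 a < real p" using k1 y1a by (simp add: zero_less_mult_iff)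
      ultimately show ?thesis by simp
    qed
    then have "\<forall>a\<in>pos_roots Phi S \<inter> zspan I. 0 < pair (dot Phi S (w \<circ> s) lam + rho Phi S) a \<and> pair (dot Phi S (w \<circ> s) lam + rho Phi S) a < real p"
      unfolding dot0 pos_def by blast
    then have "dot Phi S (w \<circ> s) lam \<in> alcove_I Phi S I p"
      unfolding alcove_I_def by (rule CollectI)
    then show "dot Phi S (w \<circ> s) lam \<in> alcove_I Phi S I p \<inter> X" using inX by blast
  qed
qed

end

theorem proposition4p13:
  fixes X Phi S I :: "'a::euclidean_space set"
    and p :: nat and s w :: "'a \<Rightarrow> 'a" and lam mu :: 'a
  assumes "root_datum X Phi" and "is_base Phi S" and "sc_derived X S"
    and "prime p" and "real p \<ge> coxeter Phi S"
    and "I \<subseteq> S"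
    and "s \<in> Wp Phi p" and "wall_refl Phi S p s"
    and "lam \<in> alcove Phi S p \<inter> X"
    and "mu \<in> alcove_cl Phi S p \<inter> X"
    and "{v \<in> Wp Phi p. dot Phi S v mu = mu} = {id, s}"
    and "w \<in> WIlam Phi S I p lam"
  shows "dot Phi S (w \<circ> s) lam \<in> alcove_I Phi S I p \<inter> X
           \<longleftrightarrow> w \<circ> s \<circ> inv w \<notin> WIp I p"
proof -
  interpret RD X Phi S p
    using assms(1,2,3) prime_gt_0_nat[OF assms(4)] by unfold_locales
  show ?thesis by (rule main[OF assms(6,7,8,9,12)])
qed

end
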